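(* Let $a,b\in\mathbb{C}$ with $b\neq0$, and suppose $\cdot_\lambda\cdot$ is a compatible left-symmetric conformal algebraic structure on $\mathcal{W}(a,b)=\mathbb{C}[\partial]L\oplus\mathbb{C}[\partial]W$ such that $\mathbb{C}[\partial]L$ is a left-symmetric conformal subalgebra. Let $c\in\mathbb{C}$ with $L_\lambda L=(\partial+\lambda+c)L$, and write $L_\lambda W=g_1L+g_2W$, $W_\lambda L=h_1L+h_2W$, $W_\lambda W=k_1L+k_2W$ with $g_i,h_i,k_i\in\mathbb{C}[\lambda,\partial]$. Assume $g_2(\lambda,\partial)=\partial+(a-1)\lambda+b+c$ and $h_2(\lambda,\partial)=\partial+\lambda+c$. Then $h_1=g_1=k_1=k_2=0$.
   Context: A conformal algebra is a $\mathbb{C}[\partial]$-module $R$ with a $\mathbb{C}$-bilinear map $R\times R\to R[\lambda]$, $(x,y)\mapsto x_\lambda y$, satisfying $(\partial x)_\lambda y=-\lambda\, x_\lambda y$ and $x_\lambda(\partial y)=(\partial+\lambda)\,x_\lambda y$. For $x,y\in R$, $y_{-\lambda-\partial}x$ means: write $y_\mu x=\sum_j \mu^j z_j$ and set $y_{-\lambda-\partial}x=\sum_j(-\lambda-\partial)^j z_j$. A left-symmetric conformal algebra is a conformal algebra with $(x_\lambda y)_{\lambda+\mu}z-x_\lambda(y_\mu z)=(y_\mu x)_{\lambda+\mu}z-y_\mu(x_\lambda z)$. A compatible left-symmetric conformal algebraic structure on a Lie conformal algebra $(R,[\cdot_\lambda\cdot])$ is a left-symmetric conformal product on the same $\mathbb{C}[\partial]$-module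 with $x_\lambda y-y_{-\lambda-\partial}x=[x_\lambda y]$ for all $x,y$. $\mathcal{W}(a,b)$ is the free $\mathbb{C}[\partial]$-module with basis $L,W$ and Lie conformal brackets $[L_\lambda L]=(\partial+2\lambda)L$, $[L_\lambda W]=(\partial+a\lambda+b)W$, $[W_\lambda W]=0$. "$\mathbb{C}[\partial]L$ is a left-symmetric conformal subalgebra" means $L_\lambda L\in(\mathbb{C}[\partial]L)[\lambda]$; in that case $L_\lambda L=(\partial+\lambda+c)L$ for some $c\in\mathbb{C}$. *)

theory Defs
  imports Complex_Main "HOL-Computational_Algebra.Polynomial"
begin

text \<open>An element sum_i p_i(d) e_i is represented by its
coefficient functions (basis => complex => complex), each required to be a polynomial in d.
A lambda-product is determined (by sesquilinearity) by structure constants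
S i j k lam d = coefficient of e_k in (e_i)_lam e_j, a polynomial in (lam, d).
Identities in R[lam], R[lam,mu] are checked pointwise in the complex variables, which is
equivalent for polynomials over C.\<close>

datatype basis = Lb | Wb

type_synonym elem = "basis \<Rightarrow> complex \<Rightarrow> complex"
type_synonym struct = "basis \<Rightarrow> basis \<Rightarrow> basis \<Rightarrow> complex \<Rightarrow> complex \<Rightarrow> complex"

definition is_poly1 :: "(complex \<Rightarrow> complex) \<Rightarrow> bool" where
  "is_poly1 f \<longleftrightarrow> (\<exists>p. \<forall>d. f d = poly p d)"

definition is_poly2 :: "(complex \<Rightarrow> complex \<Rightarrow> complex) \<Rightarrow> bool" where
  "is_poly2 f \<longleftrightarrow> (\<exists>p :: complex poly poly. \<forall>l d. f l d = poly (poly p [:d:]) l)"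

definition is_elem :: "elem \<Rightarrow> bool" where
  "is_elem x \<longleftrightarrow> (\<forall>i. is_poly1 (x i))"

definition is_struct :: "struct \<Rightarrow> bool" where
  "is_struct S \<longleftrightarrow> (\<forall>i j k. is_poly2 (S i j k))"

text \<open>x_lam y, extended sesquilinearly: (p(d) e_i)_lam (q(d) e_j) = p(-lam) q(d+lam) (e_i)_lam e_j.\<close>
definition lprod :: "struct \<Rightarrow> elem \<Rightarrow> complex \<Rightarrow> elem \<Rightarrow> elem" where
  "lprod S x lam y = (\<lambda>k d. \<Sum>i\<in>{Lb, Wb}. \<Sum>j\<in>{Lb, Wb}. x i (- lam) * y j (d + lam) * S i j k lam d)"

text \<open>y_{-lam-d} x: substitute mu := -lam-d (d acting on the coefficients).\<close>
definition lprod_opp :: "struct \<Rightarrow> elem \<Rightarrow> complex \<Rightarrow> elem \<Rightarrow> elem" where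
  "lprod_opp S y lam x = (\<lambda>k d. lprod S y (- lam - d) x k d)"

definition left_symmetric :: "struct \<Rightarrow> bool" where
  "left_symmetric S \<longleftrightarrow>
     (\<forall>x y z lam mu. is_elem x \<longrightarrow> is_elem y \<longrightarrow> is_elem z \<longrightarrow>
        lprod S (lprod S x lam y) (lam + mu) z - lprod S x lam (lprod S y mu z)
      = lprod S (lprod S y mu x) (lam + mu) z - lprod S y mu (lprod S x lam z))"

text \<open>Lie conformal brackets of W(a,b); [W_lam L] is forced by skew-symmetry:
[W_lam L] = -[L_{-lam-d} W] = ((a-1) d + a lam - b) W.\<close>
definition Wab :: "complex \<Rightarrow> complex \<Rightarrow> struct" where
  "Wab a b i j k lam d =
    (case (i, j, k) of
       (Lb, Lb, Lb) \<Rightarrow> d + 2 * lam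
     | (Lb, Wb, Wb) \<Rightarrow> d + a * lam + b
     | (Wb, Lb, Wb) \<Rightarrow> (a - 1) * d + a * lam - b
     | _ \<Rightarrow> 0)"

definition compatible :: "struct \<Rightarrow> struct \<Rightarrow> bool" where
  "compatible S Br \<longleftrightarrow>
     (\<forall>x y lam. is_elem x \<longrightarrow> is_elem y \<longrightarrow>
        lprod S x lam y - lprod_opp S y lam x = lprod Br x lam y)"

end

theory Submission
  imports Defs
begin

definition ebas :: "basis \<Rightarrow> elem" where
  "ebas i = (\<lambda>j d. if j = i then 1 else 0)"

lemma ebas_elem: "is_elem (ebas i)"
  unfolding is_elem_def is_poly1_def ebas_def
proof
  fix j
  show "\<exists>p. \<forall>d. (if j = i then 1 else 0) = poly p (d::complex)"
    by (rule exI[of _ "[:(if j = i then 1 else 0):]"]) simp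
qed

lemma sum2: "(\<Sum>k\<in>{Lb, Wb}. F k) = F Lb + F Wb"
  by simp

lemma ebas_simps: "ebas i i d = 1" "i \<noteq> j \<Longrightarrow> ebas i j d = 0"
  by (auto simp: ebas_def)

lemma LS:
  assumes "left_symmetric S"
  shows "(\<Sum>k\<in>{Lb,Wb}. S x y k lam (-(lam+mu)) * S k z m (lam+mu) d)
       - (\<Sum>k\<in>{Lb,Wb}. S y z k mu (d+lam) * S x k m lam d)
       = (\<Sum>k\<in>{Lb,Wb}. S y x k mu (-(lam+mu)) * S k z m (lam+mu) d)
       - (\<Sum>k\<in>{Lb,Wb}. S x z k lam (d+mu) * S y k m mu d)"
proof -
  have e: "lprod S (lprod S (ebas x) lam (ebas y)) (lam + mu) (ebas z) - lprod S (ebas x) lam (lprod S (ebas y) mu (ebas z))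
      = lprod S (lprod S (ebas y) mu (ebas x)) (lam + mu) (ebas z) - lprod S (ebas y) mu (lprod S (ebas x) lam (ebas z))"
    using assms ebas_elem unfolding left_symmetric_def by blast
  have e2: "lprod S (lprod S (ebas x) lam (ebas y)) (lam + mu) (ebas z) m d - lprod S (ebas x) lam (lprod S (ebas y) mu (ebas z)) m d
      = lprod S (lprod S (ebas y) mu (ebas x)) (lam + mu) (ebas z) m d - lprod S (ebas y) mu (lprod S (ebas x) lam (ebas z)) m d"
    using fun_cong[OF fun_cong[OF e, of m], of d] by simp
  show ?thesis using e2
    apply (simp only: lprod_def sum2)
    apply (cases x; cases y; cases z; simp add: ebas_def algebra_simps)
    done
qed

lemma CL:
  assumes "compatible S Br"
  shows "S i j k lam d - S j i k (-lam-d) d = Br i j k lam d"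
proof -
  have e: "lprod S (ebas i) lam (ebas j) - lprod_opp S (ebas j) lam (ebas i) = lprod Br (ebas i) lam (ebas j)"
    using assms ebas_elem unfolding compatible_def by blast
  have "lprod S (ebas i) lam (ebas j) k d - lprod_opp S (ebas j) lam (ebas i) k d = lprod Br (ebas i) lam (ebas j) k d"
    using fun_cong[OF fun_cong[OF e, of k], of d] by simp
  then show ?thesis
    by (simp add: lprod_opp_def lprod_def sum2; cases i; cases j; simp add: ebas_def)
qed

lemma poly2_in_d: "\<exists>r. \<forall>d. poly (poly (p::complex poly poly) [:d:]) l = poly r d"
proof (induction p)
  case 0
  then show ?case by (rule exI[of _ 0]) simp
next
  case (pCons q p)
  then obtain r where r: "\<forall>d. poly (poly p [:d:]) l = poly r d" by blast
  show ?case
    by (rule exI[of _ "pCons (poly q l) r"]) (simp add: r[rule_format, symmetric])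
qed

theorem lemma3p5:
  fixes a b c :: complex and S :: struct
  assumes "b \<noteq> 0"
    and "is_struct S"
    and "left_symmetric S"
    and "compatible S (Wab a b)"
    and "\<forall>lam d. S Lb Lb Wb lam d = 0"
    and "\<forall>lam d. S Lb Lb Lb lam d = d + lam + c"
    and "\<forall>lam d. S Lb Wb Wb lam d = d + (a - 1) * lam + b + c"
    and "\<forall>lam d. S Wb Lb Wb lam d = d + lam + c"
  shows "(\<forall>lam d. S Wb Lb Lb lam d = 0) \<and> (\<forall>lam d. S Lb Wb Lb lam d = 0)
       \<and> (\<forall>lam d. S Wb Wb Lb lam d = 0) \<and> (\<forall>lam d. S Wb Wb Wb lam d = 0)"
proof -
  note LS' = LS[OF assms(3)]
  note CL' = CL[OF assms(4), simplified Wab_def]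
  note kn = assms(5-8)[rule_format]
  define f where "f y = S Lb Wb Lb 0 y" for y
  have A: "b * S Wb Lb Lb lam d = (d + lam + c) * f d" for lam d
  proof -
    have 1: "S Lb Wb Lb 0 (-lam) = S Wb Lb Lb lam (-lam)"
      using CL'[of Lb Wb Lb 0 "-lam"] by simp
    show ?thesis using LS'[where x=Wb and y=Lb and z=Lb and m=Lb and lam=lam and mu=0 and d=d] 1 unfolding f_def
      by (simp add: kn sum2 algebra_simps)
  qed
  have B: "b * S Wb Wb Wb mu d = - (d + mu + c) * f (d + mu)" for mu d
  proof -
    have 1: "S Lb Wb Lb 0 (-mu) = S Wb Lb Lb mu (-mu)"
      using CL'[of Lb Wb Lb 0 "-mu"] by simp
    have "b * S Wb Wb Wb mu d + (d + mu + c) * f (d + mu) = 0"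
      using LS'[where x=Lb and y=Wb and z=Wb and m=Wb and lam=0 and mu=mu and d=d] 1 unfolding f_def
      by (simp add: kn sum2 algebra_simps)
    then show ?thesis by (simp only: mult_minus_left eq_neg_iff_add_eq_0)
  qed
  have C: "(y + c) * f y = 0" for y
  proof -
    have "S Wb Wb Wb c (y - c) = S Wb Wb Wb (-y) (y - c)"
      using CL'[of Wb Wb Wb c "y - c"] by simp
    then have "b * S Wb Wb Wb c (y - c) = b * S Wb Wb Wb (-y) (y - c)" by simp
    moreover have "b * S Wb Wb Wb (-y) (y - c) = 0" using B[of "-y" "y - c"] by simp
    moreover have "b * S Wb Wb Wb c (y - c) = - (y + c) * f y" using B[of c "y - c"] by (simp add: add.commute)
    ultimately have "- (y + c) * f y = 0" by metis
    then show ?thesis by (simp only: mult_minus_left neg_equal_0_iff_equal)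
  qed
  have f0: "f y = 0" for y
  proof -
    obtain p :: "complex poly poly" where p: "\<forall>l d. S Lb Wb Lb l d = poly (poly p [:d:]) l"
      using assms(2) unfolding is_struct_def is_poly2_def by blast
    obtain r where r: "\<forall>d. poly (poly p [:d:]) 0 = poly r d" using poly2_in_d by blast
    have "\<forall>y. poly ([:c, 1:] * r) y = 0"
      using C p r unfolding f_def by (simp add: distrib_right[symmetric] add.commute)
    then have "[:c, 1:] * r = 0" using poly_all_0_iff_0 by blast
    moreover have "[:c, 1:] \<noteq> (0::complex poly)" by simp
    ultimately have "r = 0" by (metis mult_eq_0_iff)
    then show ?thesis using p r unfolding f_def by simp
  qed
  have h0: "S Wb Lb Lb lam d = 0" for lam d using A[of lam d] f0 assms(1) by simp
  have g0: "S Lb Wb Lb lam d = 0" for lam d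
    using CL'[of Lb Wb Lb lam d] h0 by simp
  have k20: "S Wb Wb Wb lam d = 0" for lam d using B[of lam d] f0 assms(1) by simp
  have k10: "S Wb Wb Lb mu d = 0" for mu d
  proof -
    have "2 * b * S Wb Wb Lb mu d = 0"
      using LS'[where x=Lb and y=Wb and z=Wb and m=Lb and lam=0 and mu=mu and d=d] by (simp add: kn sum2 h0 g0 k20 algebra_simps)
    then show ?thesis using assms(1) by simp
  qed
  show ?thesis using h0 g0 k10 k20 by blast
qed

end
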